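(* $f_3(6,5)=4=\rho_3(T(8,4))$, where $T(8,4)$ is the complete $4$-partite graph with all parts of size $2$.
   Context: $\mathcal{G}(\Delta,\omega)$ denotes the class of finite simple graphs $G$ with maximum degree $\Delta(G)\le\Delta$ and clique number $\omega(G)\le\omega$. $k_t(G)$ is the number of copies of $K_t$ in $G$ and $\rho_t(G)=k_t(G)/|V(G)|$. $f_t(\Delta,\omega)=\sup\{\rho_t(G): G\in\mathcal{G}(\Delta,\omega),\ |V(G)|\ge 1\}$. *)

theory Defs
  imports Main "HOL-Library.Disjoint_Sets" Complex_Main
begin

text \<open>A finite simple graph on vertices drawn from nat: vertex set V, edge set E
  consisting of 2-element subsets of V. Every finite simple graph is isomorphic to one of these.\<close>
definition simple_graph :: "nat set \<Rightarrow> nat set set \<Rightarrow> bool" where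
  "simple_graph V E \<longleftrightarrow> finite V \<and> (\<forall>e\<in>E. e \<subseteq> V \<and> card e = 2)"

definition degree :: "nat set set \<Rightarrow> nat \<Rightarrow> nat" where
  "degree E v = card {e \<in> E. v \<in> e}"

definition is_clique :: "nat set \<Rightarrow> nat set set \<Rightarrow> nat set \<Rightarrow> bool" where
  "is_clique V E S \<longleftrightarrow> S \<subseteq> V \<and> (\<forall>x\<in>S. \<forall>y\<in>S. x \<noteq> y \<longrightarrow> {x, y} \<in> E)"

definition k_cliques :: "nat \<Rightarrow> nat set \<Rightarrow> nat set set \<Rightarrow> nat" where
  "k_cliques t V E = card {S. is_clique V E S \<and> card S = t}"

definition rho :: "nat \<Rightarrow> nat set \<Rightarrow> nat set set \<Rightarrow> real" where
  "rho t V E = real (k_cliques t V E) / real (card V)"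

definition in_class :: "nat \<Rightarrow> nat \<Rightarrow> nat set \<Rightarrow> nat set set \<Rightarrow> bool" where
  "in_class \<Delta> \<omega> V E \<longleftrightarrow> simple_graph V E \<and> (\<forall>v\<in>V. degree E v \<le> \<Delta>)
     \<and> (\<forall>S. is_clique V E S \<longrightarrow> card S \<le> \<omega>)"

definition f_sup :: "nat \<Rightarrow> nat \<Rightarrow> nat \<Rightarrow> real" where
  "f_sup t \<Delta> \<omega> = Sup {rho t V E | V E. in_class \<Delta> \<omega> V E \<and> card V \<ge> 1}"

text \<open>Complete 4-partite graph T(8,4): vertices 0..7, parts {0,1},{2,3},{4,5},{6,7}.\<close>
definition T84_V :: "nat set" where "T84_V = {0..<8}"
definition T84_E :: "nat set set" where
  "T84_E = {{x, y} | x y. x \<in> T84_V \<and> y \<in> T84_V \<and> x div 2 \<noteq> y div 2}"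

end

theory Submission
  imports Defs
begin


definition nb :: "nat set set \<Rightarrow> nat \<Rightarrow> nat set" where "nb E v = {u. {v,u} \<in> E}"
definition prs :: "nat set \<Rightarrow> nat set set" where "prs B = {e. e \<subseteq> B \<and> card e = 2}"
definition tv :: "nat set set \<Rightarrow> nat \<Rightarrow> nat" where "tv E v = card {e \<in> prs (nb E v). e \<in> E}"

lemma edge_props:
  assumes "simple_graph V E" "{x,y} \<in> E"
  shows "x \<noteq> y \<and> x \<in> V \<and> y \<in> V"
proof -
  have "{x,y} \<subseteq> V" "card {x,y} = 2" using assms unfolding simple_graph_def by auto
  then show ?thesis by (cases "x = y") auto
qed

lemma nb_sym: "u \<in> nb E v \<longleftrightarrow> v \<in> nb E u"
  unfolding nb_def by (simp add: insert_commute)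

lemma nb_sub: assumes "simple_graph V E" shows "nb E v \<subseteq> V" "v \<notin> nb E v" "finite (nb E v)"
proof -
  show "nb E v \<subseteq> V" using edge_props[OF assms] unfolding nb_def by blast
  then show "finite (nb E v)" using assms unfolding simple_graph_def by (meson finite_subset)
  show "v \<notin> nb E v" using edge_props[OF assms] unfolding nb_def by blast
qed

lemma degree_nb: assumes "simple_graph V E" shows "degree E v = card (nb E v)"
proof -
  have "bij_betw (\<lambda>u. {v,u}) (nb E v) {e \<in> E. v \<in> e}"
  proof (rule bij_betw_byWitness[where f' = "\<lambda>e. the_elem (e - {v})"])
    show "\<forall>a\<in>nb E v. the_elem ({v, a} - {v}) = a"
    proof
      fix a assume "a \<in> nb E v"
      then have "a \<noteq> v" using nb_sub(2)[OF assms] by auto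
      then have "{v,a} - {v} = {a}" by auto
      then show "the_elem ({v, a} - {v}) = a" by simp
    qed
    show "\<forall>a'\<in>{e \<in> E. v \<in> e}. {v, the_elem (a' - {v})} = a'"
    proof
      fix e assume "e \<in> {e \<in> E. v \<in> e}"
      then have "e \<in> E" "v \<in> e" "card e = 2" using assms unfolding simple_graph_def by auto
      then obtain x y where "e = {x,y}" "x \<noteq> y" by (auto simp: card_2_iff)
      then have "e - {v} = {if v = x then y else x}" "e = {v, if v = x then y else x}"
        using \<open>v \<in> e\<close> by auto
      then show "{v, the_elem (e - {v})} = e" by simp
    qed
    show "(\<lambda>u. {v, u}) ` nb E v \<subseteq> {e \<in> E. v \<in> e}" unfolding nb_def by auto
    show "(\<lambda>e. the_elem (e - {v})) ` {e \<in> E. v \<in> e} \<subseteq> nb E v"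
    proof
      fix u assume "u \<in> (\<lambda>e. the_elem (e - {v})) ` {e \<in> E. v \<in> e}"
      then obtain e where e: "e \<in> E" "v \<in> e" "u = the_elem (e - {v})" by auto
      then have "card e = 2" using assms unfolding simple_graph_def by auto
      then obtain x y where "e = {x,y}" "x \<noteq> y" by (auto simp: card_2_iff)
      then have "e - {v} = {if v = x then y else x}" "e = {v, if v = x then y else x}"
        using \<open>v \<in> e\<close> by auto
      then show "u \<in> nb E v" using e unfolding nb_def by simp
    qed
  qed
  then show ?thesis unfolding degree_def by (simp add: bij_betw_same_card)
qed

lemma card_prs: "finite B \<Longrightarrow> card (prs B) = card B choose 2"
  unfolding prs_def by (rule n_subsets)

lemma finite_prs: "finite B \<Longrightarrow> finite (prs B)"
  unfolding prs_def by simp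

lemma split_count: assumes "finite B"
  shows "card {e \<in> prs B. e \<in> E} + card {e \<in> prs B. e \<notin> E} = card B choose 2"
proof -
  have "prs B = {e \<in> prs B. e \<in> E} \<union> {e \<in> prs B. e \<notin> E}" by auto
  then have "card (prs B) = card {e \<in> prs B. e \<in> E} + card {e \<in> prs B. e \<notin> E}"
    using finite_prs[OF assms] by (subst card_Un_disjoint[symmetric]) auto
  then show ?thesis using card_prs[OF assms] by simp
qed

lemma pair_in_prs: "x \<in> B \<Longrightarrow> y \<in> B \<Longrightarrow> x \<noteq> y \<Longrightarrow> {x,y} \<in> prs B"
  unfolding prs_def by auto

lemma prs_elem: assumes "e \<in> prs B" obtains x y where "e = {x,y}" "x \<noteq> y" "x \<in> B" "y \<in> B"
proof -
  have "e \<subseteq> B" "card e = 2" using assms unfolding prs_def by auto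
  then obtain x y where "e = {x,y}" "x \<noteq> y" by (meson card_2_iff)
  then show ?thesis using that \<open>e \<subseteq> B\<close> by blast
qed



lemma card_filter_sum: "finite A \<Longrightarrow> card {x\<in>A. P x} = (\<Sum>x\<in>A. if P x then 1 else 0)"
  by (simp add: sum.inter_filter[symmetric])

lemma dc: "finite A \<Longrightarrow> finite B \<Longrightarrow> (\<Sum>a\<in>A. card {b\<in>B. R a b}) = (\<Sum>b\<in>B. card {a\<in>A. R a b})"
  by (simp add: card_filter_sum sum.swap[of _ A B])

lemma tri_sum: assumes sg: "simple_graph V E"
  shows "(\<Sum>v\<in>V. tv E v) = 3 * k_cliques 3 V E"
proof -
  let ?T = "{S. is_clique V E S \<and> card S = 3}"
  have finV: "finite V" using sg unfolding simple_graph_def by auto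
  have finT: "finite ?T"
    by (rule finite_subset[of _ "Pow V"]) (auto simp: is_clique_def finV)
  have tv_eq: "tv E v = card {S\<in>?T. v\<in>S}" if "v \<in> V" for v
  proof -
    have "bij_betw (insert v) {e \<in> prs (nb E v). e \<in> E} {S\<in>?T. v\<in>S}"
    proof (rule bij_betw_byWitness[where f' = "\<lambda>S. S - {v}"])
      show "\<forall>a\<in>{e \<in> prs (nb E v). e \<in> E}. insert v a - {v} = a"
        using nb_sub(2)[OF sg] unfolding prs_def by auto
      show "\<forall>a'\<in>{S\<in>?T. v\<in>S}. insert v (a' - {v}) = a'" by auto
      show "insert v ` {e \<in> prs (nb E v). e \<in> E} \<subseteq> {S\<in>?T. v\<in>S}"
      proof
        fix S assume "S \<in> insert v ` {e \<in> prs (nb E v). e \<in> E}"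
        then obtain e where e: "e \<in> prs (nb E v)" "e \<in> E" "S = insert v e" by auto
        obtain x y where xy: "e = {x,y}" "x \<noteq> y" "x \<in> nb E v" "y \<in> nb E v" using prs_elem[OF e(1)] by blast
        have vx: "v \<noteq> x" "v \<noteq> y" using xy nb_sub(2)[OF sg] by auto
        have E1: "{v,x} \<in> E" "{v,y} \<in> E" "{x,y} \<in> E" using xy e unfolding nb_def by auto
        have "x \<in> V" "y \<in> V" using xy nb_sub(1)[OF sg] by auto
        have "is_clique V E {v,x,y}" unfolding is_clique_def
          using E1 \<open>x \<in> V\<close> \<open>y \<in> V\<close> that by (auto simp: insert_commute)
        moreover have "card {v,x,y} = 3" using vx xy by auto
        ultimately show "S \<in> {S\<in>?T. v\<in>S}" using e xy by auto
      qed
      show "(\<lambda>S. S - {v}) ` {S\<in>?T. v\<in>S} \<subseteq> {e \<in> prs (nb E v). e \<in> E}"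
      proof
        fix e assume "e \<in> (\<lambda>S. S - {v}) ` {S\<in>?T. v\<in>S}"
        then obtain S where S: "is_clique V E S" "card S = 3" "v \<in> S" "e = S - {v}" by auto
        then obtain x y z where xyz: "S = {x,y,z}" "x \<noteq> y" "y \<noteq> z" "x \<noteq> z" by (meson card_3_iff)
        have ce: "card e = 2" using S by (simp add: S(4))
        then obtain p q where pq: "e = {p,q}" "p \<noteq> q" by (meson card_2_iff)
        have "p \<in> S" "q \<in> S" "p \<noteq> v" "q \<noteq> v" using pq S by auto
        then have "{v,p} \<in> E" "{v,q} \<in> E" "{p,q} \<in> E" using S(1) pq(2) \<open>v \<in> S\<close> unfolding is_clique_def by auto
        then have "e \<subseteq> nb E v" "e \<in> E" using pq unfolding nb_def by auto
        then show "e \<in> {e \<in> prs (nb E v). e \<in> E}" using ce unfolding prs_def by auto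
      qed
    qed
    then show ?thesis unfolding tv_def by (rule bij_betw_same_card)
  qed
  have "(\<Sum>v\<in>V. tv E v) = (\<Sum>v\<in>V. card {S\<in>?T. v\<in>S})" using tv_eq by simp
  also have "\<dots> = (\<Sum>S\<in>?T. card {v\<in>V. v\<in>S})" by (rule dc[OF finV finT])
  also have "\<dots> = (\<Sum>S\<in>?T. 3)"
  proof (rule sum.cong)
    fix S assume "S \<in> ?T"
    then have "{v\<in>V. v\<in>S} = S" "card S = 3" unfolding is_clique_def by auto
    then show "card {v\<in>V. v\<in>S} = 3" by simp
  qed simp
  also have "\<dots> = 3 * k_cliques 3 V E" unfolding k_cliques_def by simp
  finally show ?thesis .
qed



definition st :: "nat set set \<Rightarrow> nat \<Rightarrow> nat \<Rightarrow> nat \<Rightarrow> nat \<Rightarrow> nat \<Rightarrow> nat \<Rightarrow> nat \<Rightarrow> bool" where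
  "st E h c d a a' b b' \<longleftrightarrow> distinct [c,d,a,a',b,b'] \<and> nb E h = {c,d,a,a',b,b'} \<and>
     (\<forall>x\<in>nb E h. \<forall>y\<in>nb E h. x \<noteq> y \<longrightarrow> ({x,y} \<in> E \<longleftrightarrow> {x,y} \<noteq> {a,a'} \<and> {x,y} \<noteq> {b,b'}))"

lemma st_cd: assumes "st E h c d a a' b b'" shows "st E h d c a a' b b'"
proof -
  have e: "{d,c,a,a',b,b'} = {c,d,a,a',b,b'}" by (rule insert_commute)
  have "distinct [d,c,a,a',b,b']" using assms unfolding st_def by (simp only: distinct.simps set_simps insert_iff empty_iff) meson
  then show ?thesis using assms unfolding st_def e by (simp only: simp_thms) (metis (no_types, lifting))
qed
lemma st_aa: assumes "st E h c d a a' b b'" shows "st E h c d a' a b b'"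
proof -
  have e: "{c,d,a',a,b,b'} = {c,d,a,a',b,b'}" "{a',a} = {a,a'}" by (simp only: insert_commute)+
  have "distinct [c,d,a',a,b,b']" using assms unfolding st_def by (simp only: distinct.simps set_simps insert_iff empty_iff) meson
  then show ?thesis using assms unfolding st_def e by (simp only: simp_thms) (metis (no_types, lifting))
qed
lemma st_ab: assumes "st E h c d a a' b b'" shows "st E h c d b b' a a'"
proof -
  have e: "{c,d,b,b',a,a'} = {c,d,a,a',b,b'}" by (simp only: insert_commute)
  have "distinct [c,d,b,b',a,a']" using assms unfolding st_def by (simp only: distinct.simps set_simps insert_iff empty_iff) meson
  moreover have "(P \<and> Q) = (Q \<and> P)" for P Q by (rule conj_commute)
  ultimately show ?thesis using assms unfolding st_def e by (simp only: simp_thms conj_commute) (metis (no_types, lifting))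
qed

locale G =
  fixes V :: "nat set" and E :: "nat set set"
  assumes sg: "simple_graph V E"
    and clq: "\<And>S. is_clique V E S \<Longrightarrow> card S \<le> 5"
    and deg: "\<And>v. card (nb E v) \<le> 6"
begin

lemma clique_ins:
  assumes "Z \<subseteq> nb E v" "\<forall>x\<in>Z. \<forall>y\<in>Z. x \<noteq> y \<longrightarrow> {x,y} \<in> E"
  shows "card Z \<le> 4"
proof (cases "Z = {}")
  case True then show ?thesis by simp
next
  case False
  then obtain z where "z \<in> Z" by auto
  then have "{v,z} \<in> E" using assms unfolding nb_def by auto
  then have "v \<in> V" using edge_props[OF sg] by blast
  have "is_clique V E (insert v Z)" unfolding is_clique_def
  proof (intro conjI ballI impI)
    show "insert v Z \<subseteq> V" using \<open>v \<in> V\<close> assms(1) nb_sub(1)[OF sg] by auto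
    fix x y assume "x \<in> insert v Z" "y \<in> insert v Z" "x \<noteq> y"
    show "{x,y} \<in> E"
    proof (cases "x = v")
      case True then show ?thesis using \<open>y \<in> insert v Z\<close> \<open>x \<noteq> y\<close> assms(1) unfolding nb_def by auto
    next
      case xv: False
      show ?thesis
      proof (cases "y = v")
        case True
        then have "x \<in> Z" using \<open>x \<in> insert v Z\<close> xv by auto
        then have "{v,x} \<in> E" using assms(1) unfolding nb_def by auto
        then show ?thesis using True by (simp add: insert_commute)
      next
        case False then show ?thesis using xv \<open>x \<in> insert v Z\<close> \<open>y \<in> insert v Z\<close> \<open>x \<noteq> y\<close> assms(2) by auto
      qed
    qed
  qed
  then have "card (insert v Z) \<le> 5" by (rule clq)
  moreover have "finite Z" "v \<notin> Z" using assms(1) nb_sub[OF sg] by (auto intro: finite_subset)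
  ultimately show ?thesis by simp
qed

lemma cover:
  assumes "\<forall>e\<in>{e \<in> prs (nb E v). e \<notin> E}. z \<in> e"
  shows "card (nb E v) \<le> 5"
proof -
  have cl: "\<forall>x\<in>nb E v - {z}. \<forall>y\<in>nb E v - {z}. x \<noteq> y \<longrightarrow> {x,y} \<in> E"
  proof (intro ballI impI)
    fix x y assume xy: "x \<in> nb E v - {z}" "y \<in> nb E v - {z}" "x \<noteq> y"
    have p: "{x,y} \<in> prs (nb E v)" using xy by (intro pair_in_prs) auto
    have "z \<notin> {x,y}" using xy by auto
    show "{x,y} \<in> E"
    proof (rule ccontr)
      assume "{x,y} \<notin> E"
      have "{x,y} \<in> {e \<in> prs (nb E v). e \<notin> E}" using p \<open>{x,y} \<notin> E\<close> by simp
      from bspec[OF assms this] have "z \<in> {x,y}" .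
      then show False using \<open>z \<notin> {x,y}\<close> by contradiction
    qed
  qed
  have "nb E v - {z} \<subseteq> nb E v" by (rule Diff_subset)
  from clique_ins[OF this cl] have c4: "card (nb E v - {z}) \<le> 4" .
  have "finite (nb E v)" using nb_sub[OF sg] by auto
  then have "card (nb E v) \<le> card (nb E v - {z}) + 1"
    by (cases "z \<in> nb E v") (auto simp: card_Diff_singleton)
  then show ?thesis using c4 by linarith
qed

lemma choose_le5: "m \<le> 5 \<Longrightarrow> m choose 2 \<le> 10"
  using binomial_right_mono[of m 5 2] by (simp add: choose_two)

lemma tv_small: "card (nb E v) \<le> 5 \<Longrightarrow> tv E v \<le> 10"
  using split_count[of "nb E v" E] nb_sub(3)[OF sg] choose_le5 unfolding tv_def by fastforce

lemma M_ge2: assumes "card (nb E v) = 6" shows "card {e \<in> prs (nb E v). e \<notin> E} \<ge> 2"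
proof (rule ccontr)
  let ?M = "{e \<in> prs (nb E v). e \<notin> E}"
  assume "\<not> ?thesis"
  then have "card ?M = 0 \<or> card ?M = 1" by auto
  moreover have "finite ?M" using finite_prs nb_sub(3)[OF sg] by auto
  ultimately have "?M = {} \<or> (\<exists>e. ?M = {e})" by (auto simp: card_1_singleton_iff)
  then obtain z where "\<forall>e\<in>?M. z \<in> e"
  proof
    assume "?M = {}" then show ?thesis using that by auto
  next
    assume "\<exists>e. ?M = {e}"
    then obtain e where "?M = {e}" by auto
    then have "e \<in> prs (nb E v)" by auto
    then obtain x y where "e = {x,y}" using prs_elem by blast
    then show ?thesis using that \<open>?M = {e}\<close> by auto
  qed
  then have "card (nb E v) \<le> 5" by (rule cover)
  then show False using assms by simp
qed

lemma tv_le13: "tv E v \<le> 13"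
proof -
  have "card (nb E v) \<le> 5 \<or> card (nb E v) = 6" using deg[of v] by auto
  then show ?thesis
  proof
    assume "card (nb E v) \<le> 5" then show ?thesis using tv_small by fastforce
  next
    assume h6: "card (nb E v) = 6"
    have "(6::nat) choose 2 = 15" by (simp add: choose_two)
    then show ?thesis using split_count[of "nb E v" E] nb_sub(3)[OF sg] M_ge2[OF h6] h6
      unfolding tv_def by simp
  qed
qed

end


lemma card_pair_le: "card {p,q} \<le> 2"
  by (cases "p = q") auto

context G begin

lemma tv_split6: assumes "card (nb E v) = 6"
  shows "tv E v + card {e \<in> prs (nb E v). e \<notin> E} = 15"
proof -
  have "(6::nat) choose 2 = 15" by (simp add: choose_two)
  then show ?thesis using split_count[of "nb E v" E] nb_sub(3)[OF sg] assms unfolding tv_def by simp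
qed

lemma struct:
  assumes "13 \<le> tv E h"
  shows "\<exists>c d a a' b b'. st E h c d a a' b b'"
proof -
  let ?A = "nb E h"
  let ?M = "{e \<in> prs ?A. e \<notin> E}"
  have finA: "finite ?A" using nb_sub[OF sg] by simp
  have c6: "card ?A = 6"
  proof (rule ccontr)
    assume "card ?A \<noteq> 6"
    then have "card ?A \<le> 5" using deg[of h] by simp
    then have "tv E h \<le> 10" by (rule tv_small)
    then show False using assms by simp
  qed
  have C: "tv E h + card ?M = 15" by (rule tv_split6[OF c6])
  have "card ?M \<ge> 2" by (rule M_ge2[OF c6])
  then have "card ?M = 2" using C assms by simp
  then obtain e1 e2 where M: "?M = {e1,e2}" "e1 \<noteq> e2" by (meson card_2_iff)
  have disj: "e1 \<inter> e2 = {}"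
  proof (rule ccontr)
    assume "e1 \<inter> e2 \<noteq> {}"
    then obtain z where "z \<in> e1" "z \<in> e2" by auto
    then have "\<forall>e\<in>?M. z \<in> e" unfolding M(1) by simp
    then have "card ?A \<le> 5" by (rule cover)
    then show False using c6 by simp
  qed
  have "e1 \<in> prs ?A" "e2 \<in> prs ?A" "e1 \<notin> E" "e2 \<notin> E" using M(1) by (simp_all add: set_eq_iff) (metis (no_types, lifting) mem_Collect_eq insertI1 insertI2 singletonI)+
  then obtain a a' b b' where ab: "e1 = {a,a'}" "a \<noteq> a'" "a \<in> ?A" "a' \<in> ?A"
      "e2 = {b,b'}" "b \<noteq> b'" "b \<in> ?A" "b' \<in> ?A" using prs_elem by metis
  have d4: "a \<noteq> b" "a \<noteq> b'" "a' \<noteq> b" "a' \<noteq> b'" using disj ab by auto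
  have sub4: "{a,a',b,b'} \<subseteq> ?A" using ab by simp
  have card4: "card {a,a',b,b'} = 4" using d4 ab by simp
  have "card (?A - {a,a',b,b'}) = 2" using card_Diff_subset[OF _ sub4] c6 card4 by simp
  then obtain c d where cd: "?A - {a,a',b,b'} = {c,d}" "c \<noteq> d" by (meson card_2_iff)
  have Aeq: "?A = {c,d,a,a',b,b'}" using cd(1) sub4 by auto
  have cnot: "c \<notin> {a,a',b,b'}" "d \<notin> {a,a',b,b'}" using cd(1) by auto
  have dist: "distinct [c,d,a,a',b,b']" using cnot cd(2) ab(2,6) d4 by simp
  have adj: "\<forall>x\<in>?A. \<forall>y\<in>?A. x \<noteq> y \<longrightarrow> ({x,y} \<in> E \<longleftrightarrow> {x,y} \<noteq> {a,a'} \<and> {x,y} \<noteq> {b,b'})"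
  proof (intro ballI impI)
    fix x y assume xy: "x \<in> ?A" "y \<in> ?A" "x \<noteq> y"
    have p: "{x,y} \<in> prs ?A" using xy by (intro pair_in_prs)
    have "({x,y} \<notin> E) \<longleftrightarrow> {x,y} \<in> ?M" using p by simp
    also have "\<dots> \<longleftrightarrow> {x,y} = {a,a'} \<or> {x,y} = {b,b'}" unfolding M(1) ab(1,5) by simp
    finally show "{x,y} \<in> E \<longleftrightarrow> {x,y} \<noteq> {a,a'} \<and> {x,y} \<noteq> {b,b'}" by blast
  qed
  have "st E h c d a a' b b'" unfolding st_def using dist Aeq adj by simp
  then show ?thesis by blast
qed

end


context G begin

lemma st_facts:
  assumes "st E h c d a a' b b'"
  shows "distinct [h,c,d,a,a',b,b']" "nb E h = {c,d,a,a',b,b'}"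
    "\<And>x y. x \<in> nb E h \<Longrightarrow> y \<in> nb E h \<Longrightarrow> x \<noteq> y \<Longrightarrow> {x,y} \<in> E \<longleftrightarrow> {x,y} \<noteq> {a,a'} \<and> {x,y} \<noteq> {b,b'}"
proof -
  have D: "distinct [c,d,a,a',b,b']" and N: "nb E h = {c,d,a,a',b,b'}"
    using assms unfolding st_def by simp_all
  have "h \<notin> nb E h" using nb_sub(2)[OF sg] .
  then show "distinct [h,c,d,a,a',b,b']" using D N by simp
  show "nb E h = {c,d,a,a',b,b'}" by (rule N)
  fix x y assume "x \<in> nb E h" "y \<in> nb E h" "x \<noteq> y"
  then show "{x,y} \<in> E \<longleftrightarrow> {x,y} \<noteq> {a,a'} \<and> {x,y} \<noteq> {b,b'}"
    using assms unfolding st_def by simp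
qed

lemma nb_center:
  assumes st: "st E h c d a a' b b'"
  shows "nb E c = {h,d,a,a',b,b'}"
proof -
  note D = st_facts(1)[OF st] and N = st_facts(2)[OF st] and A = st_facts(3)[OF st]
  have "c \<in> nb E h" using N by simp
  then have hc: "h \<in> nb E c" by (simp add: nb_sym)
  have "{c,x} \<in> E" if "x \<in> {d,a,a',b,b'}" for x
  proof -
    have "x \<in> nb E h" "c \<in> nb E h" "c \<noteq> x" using that N D by auto
    moreover have "{c,x} \<noteq> {a,a'}" "{c,x} \<noteq> {b,b'}" using D by (auto simp: doubleton_eq_iff)
    ultimately show ?thesis using A by simp
  qed
  then have sub: "{h,d,a,a',b,b'} \<subseteq> nb E c" using hc unfolding nb_def by auto
  have c6: "card {h,d,a,a',b,b'} = 6" using D by simp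
  show ?thesis
    using card_seteq[OF nb_sub(3)[OF sg] sub] deg[of c] c6 by simp
qed

lemma center:
  assumes st: "st E h c d a a' b b'"
  shows "13 \<le> tv E c"
proof -
  note D = st_facts(1)[OF st] and N = st_facts(2)[OF st] and A = st_facts(3)[OF st]
  note NC = nb_center[OF st]
  have c6: "card (nb E c) = 6" using D NC by simp
  have "{e \<in> prs (nb E c). e \<notin> E} \<subseteq> {{a,a'},{b,b'}}"
  proof
    fix e assume e: "e \<in> {e \<in> prs (nb E c). e \<notin> E}"
    then obtain x y where xy: "e = {x,y}" "x \<noteq> y" "x \<in> nb E c" "y \<in> nb E c" using prs_elem by blast
    have nE: "{x,y} \<notin> E" using e xy by simp
    have hx: "x \<noteq> h"
    proof
      assume "x = h"
      then have "y \<in> nb E h" using xy NC N by auto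
      then have "{h,y} \<in> E" unfolding nb_def by simp
      then show False using nE \<open>x = h\<close> by simp
    qed
    have hy: "y \<noteq> h"
    proof
      assume "y = h"
      then have "x \<in> nb E h" using xy NC N by auto
      then have "{h,x} \<in> E" unfolding nb_def by simp
      then show False using nE \<open>y = h\<close> by (simp add: insert_commute)
    qed
    have "x \<in> nb E h" "y \<in> nb E h" using xy hx hy NC N by auto
    then have "{x,y} = {a,a'} \<or> {x,y} = {b,b'}" using A[of x y] nE xy(2) by simp
    then show "e \<in> {{a,a'},{b,b'}}" using xy by simp
  qed
  then have "card {e \<in> prs (nb E c). e \<notin> E} \<le> card {{a,a'},{b,b'}}"
    by (intro card_mono) simp_all
  then have "card {e \<in> prs (nb E c). e \<notin> E} \<le> 2"
    using card_pair_le[of "{a,a'}" "{b,b'}"] by linarith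
  then show ?thesis using tv_split6[OF c6] by simp
qed

lemma periph:
  assumes st: "st E h c d a a' b b'"
  shows "tv E a \<le> 11"
proof -
  note D = st_facts(1)[OF st] and N = st_facts(2)[OF st] and A = st_facts(3)[OF st]
  note NC = nb_center[OF st] and ND = nb_center[OF st_cd[OF st]]
  have "{a,x} \<in> E" if "x \<in> {c,d,b,b'}" for x
  proof -
    have "x \<in> nb E h" "a \<in> nb E h" "a \<noteq> x" using that N D by auto
    moreover have "{a,x} \<noteq> {a,a'}" "{a,x} \<noteq> {b,b'}" using D that by (auto simp: doubleton_eq_iff)
    ultimately show ?thesis using A by simp
  qed
  moreover have "h \<in> nb E a" using N by (simp add: nb_sym)
  ultimately have sub: "{h,c,d,b,b'} \<subseteq> nb E a" unfolding nb_def by auto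
  have a'n: "a' \<notin> nb E a"
  proof
    assume "a' \<in> nb E a"
    then have "{a,a'} \<in> E" unfolding nb_def by simp
    moreover have "a \<in> nb E h" "a' \<in> nb E h" "a \<noteq> a'" using N D by auto
    ultimately show False using A by simp
  qed
  have finK: "finite (nb E a)" using nb_sub(3)[OF sg] .
  show ?thesis
  proof (cases "card (nb E a) \<le> 5")
    case True then show ?thesis using tv_small by fastforce
  next
    case False
    then have k6: "card (nb E a) = 6" using deg[of a] by simp
    have c5: "card {h,c,d,b,b'} = 5" using D by simp
    have "card (nb E a - {h,c,d,b,b'}) = 1" using card_Diff_subset[OF _ sub] k6 c5 by simp
    then obtain x where x: "nb E a - {h,c,d,b,b'} = {x}" by (metis One_nat_def card_1_singleton_iff)
    have xK: "x \<in> nb E a" and xn: "x \<notin> {h,c,d,b,b'}" using x by auto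
    have xa: "x \<noteq> a" using xK nb_sub(2)[OF sg] by auto
    have xa': "x \<noteq> a'" using xK a'n by auto
    have xh: "{x,h} \<notin> E"
    proof
      assume "{x,h} \<in> E"
      then have "x \<in> nb E h" unfolding nb_def by (simp add: insert_commute)
      then show False using N xn xa xa' by simp
    qed
    have xc: "{x,c} \<notin> E"
    proof
      assume "{x,c} \<in> E"
      then have "x \<in> nb E c" unfolding nb_def by (simp add: insert_commute)
      then show False using NC xn xa xa' by simp
    qed
    have xd: "{x,d} \<notin> E"
    proof
      assume "{x,d} \<in> E"
      then have "x \<in> nb E d" unfolding nb_def by (simp add: insert_commute)
      then show False using ND xn xa xa' by simp
    qed
    have bb: "{b,b'} \<notin> E"
      using A[of b b'] N D by simp
    have hK: "h \<in> nb E a" "c \<in> nb E a" "d \<in> nb E a" "b \<in> nb E a" "b' \<in> nb E a" using sub by auto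
    have "{{b,b'},{x,h},{x,c},{x,d}} \<subseteq> {e \<in> prs (nb E a). e \<notin> E}"
      using xh xc xd bb hK xK xn D by (simp add: pair_in_prs)
    moreover have "card {{b,b'},{x,h},{x,c},{x,d}} = 4"
    proof -
      have ne: "{b,b'} \<noteq> {x,h}" "{b,b'} \<noteq> {x,c}" "{b,b'} \<noteq> {x,d}" "{x,h} \<noteq> {x,c}" "{x,h} \<noteq> {x,d}" "{x,c} \<noteq> {x,d}"
        using xn D xa xa' by (auto simp: doubleton_eq_iff)
      then show ?thesis by simp
    qed
    moreover have "finite {e \<in> prs (nb E a). e \<notin> E}" using finite_prs[OF finK] by simp
    ultimately have "4 \<le> card {e \<in> prs (nb E a). e \<notin> E}"
      using card_mono by metis
    then show ?thesis using tv_split6[OF k6] by simp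
  qed
qed

end


context G begin

lemma periph_pair:
  assumes st: "st E h c d a a' b b'"
  shows "b \<in> nb E a" "b' \<in> nb E a" "b \<noteq> b'" "tv E b \<le> 11" "tv E b' \<le> 11"
proof -
  note D = st_facts(1)[OF st] and N = st_facts(2)[OF st] and A = st_facts(3)[OF st]
  have "{a,b} \<noteq> {a,a'}" "{a,b} \<noteq> {b,b'}" "{a,b'} \<noteq> {a,a'}" "{a,b'} \<noteq> {b,b'}" using D by (auto simp: doubleton_eq_iff)
  then have "{a,b} \<in> E" "{a,b'} \<in> E" using A[of a b] A[of a b'] N D by simp_all
  then show "b \<in> nb E a" "b' \<in> nb E a" unfolding nb_def by simp_all
  show "b \<noteq> b'" using D by simp
  show "tv E b \<le> 11" by (rule periph[OF st_ab[OF st]])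
  show "tv E b' \<le> 11" by (rule periph[OF st_aa[OF st_ab[OF st]]])
qed

lemma H_nbrs:
  assumes "13 \<le> tv E h"
  shows "4 \<le> card {p \<in> {v\<in>V. tv E v \<le> 11}. p \<in> nb E h}"
proof -
  obtain c d a a' b b' where st: "st E h c d a a' b b'" using struct[OF assms] by blast
  note D = st_facts(1)[OF st] and N = st_facts(2)[OF st]
  have t: "tv E a \<le> 11" "tv E a' \<le> 11" "tv E b \<le> 11" "tv E b' \<le> 11"
    using periph[OF st] periph[OF st_aa[OF st]] periph[OF st_ab[OF st]] periph[OF st_aa[OF st_ab[OF st]]] by simp_all
  have "nb E h \<subseteq> V" by (rule nb_sub(1)[OF sg])
  then have sub: "{a,a',b,b'} \<subseteq> {p \<in> {v\<in>V. tv E v \<le> 11}. p \<in> nb E h}" using t N by auto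
  have fin: "finite {p \<in> {v\<in>V. tv E v \<le> 11}. p \<in> nb E h}"
    using sg unfolding simple_graph_def by simp
  have "card {a,a',b,b'} = 4" using D by simp
  then show ?thesis using card_mono[OF fin sub] by simp
qed

lemma L_nbrs:
  assumes "tv E p \<le> 11"
  shows "card {h \<in> {v\<in>V. 13 \<le> tv E v}. p \<in> nb E h} \<le> 4"
proof (cases "{h \<in> {v\<in>V. 13 \<le> tv E v}. p \<in> nb E h} = {}")
  case True then show ?thesis by (subst True) simp
next
  case False
  then obtain h where h: "13 \<le> tv E h" "p \<in> nb E h" by auto
  obtain c d a a' b b' where st: "st E h c d a a' b b'" using struct[OF h(1)] by blast
  note N = st_facts(2)[OF st]
  have "p \<noteq> c" using center[OF st] assms by auto
  moreover have "p \<noteq> d" using center[OF st_cd[OF st]] assms by auto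
  ultimately have "p \<in> {a,a',b,b'}" using h(2) N by auto
  then obtain q q' where q: "q \<in> nb E p" "q' \<in> nb E p" "q \<noteq> q'" "tv E q \<le> 11" "tv E q' \<le> 11"
  proof (elim insertE)
    assume "p = a" then show thesis using that periph_pair[OF st] by blast
  next
    assume "p = a'" then show thesis using that periph_pair[OF st_aa[OF st]] by blast
  next
    assume "p = b" then show thesis using that periph_pair[OF st_ab[OF st]] by blast
  next
    assume "p = b'" then show thesis using that periph_pair[OF st_aa[OF st_ab[OF st]]] by blast
  qed simp
  have sub: "{h \<in> {v\<in>V. 13 \<le> tv E v}. p \<in> nb E h} \<subseteq> nb E p - {q,q'}"
  proof
    fix x assume x: "x \<in> {h \<in> {v\<in>V. 13 \<le> tv E v}. p \<in> nb E h}"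
    then have "x \<in> nb E p" "13 \<le> tv E x" by (simp_all add: nb_sym)
    then show "x \<in> nb E p - {q,q'}" using q by auto
  qed
  have fin: "finite (nb E p)" by (rule nb_sub(3)[OF sg])
  have "card (nb E p - {q,q'}) = card (nb E p) - 2"
    using q by (simp add: card_Diff_subset fin)
  then have "card (nb E p - {q,q'}) \<le> 4" using deg[of p] by simp
  then show ?thesis using card_mono[OF _ sub] fin by (meson finite_Diff le_trans)
qed

lemma HL: "card {v\<in>V. 13 \<le> tv E v} \<le> card {v\<in>V. tv E v \<le> 11}"
proof -
  let ?H = "{v\<in>V. 13 \<le> tv E v}" and ?L = "{v\<in>V. tv E v \<le> 11}"
  have finV: "finite V" using sg unfolding simple_graph_def by simp
  then have fH: "finite ?H" and fL: "finite ?L" by simp_all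
  have "card ?H * 4 \<le> (\<Sum>h\<in>?H. card {p \<in> ?L. p \<in> nb E h})"
    using sum_bounded_below[of ?H 4 "\<lambda>h. card {p \<in> ?L. p \<in> nb E h}"] H_nbrs by simp
  also have "\<dots> = (\<Sum>p\<in>?L. card {h \<in> ?H. p \<in> nb E h})" by (rule dc[OF fH fL])
  also have "\<dots> \<le> card ?L * 4"
    using sum_bounded_above[of ?L "\<lambda>p. card {h \<in> ?H. p \<in> nb E h}" 4] L_nbrs by simp
  finally show ?thesis by simp
qed

lemma sum_tv: "(\<Sum>v\<in>V. tv E v) \<le> 12 * card V"
proof -
  have finV: "finite V" using sg unfolding simple_graph_def by simp
  have "(\<Sum>v\<in>V. tv E v + (if tv E v \<le> 11 then 1 else 0)) \<le> (\<Sum>v\<in>V. 12 + (if 13 \<le> tv E v then 1 else 0))"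
  proof (rule sum_mono)
    fix v show "tv E v + (if tv E v \<le> 11 then 1 else 0) \<le> 12 + (if 13 \<le> tv E v then 1 else (0::nat))"
      using tv_le13[of v] by simp
  qed
  then have "(\<Sum>v\<in>V. tv E v) + card {v\<in>V. tv E v \<le> 11} \<le> 12 * card V + card {v\<in>V. 13 \<le> tv E v}"
    by (simp add: sum.distrib card_filter_sum[OF finV])
  then show ?thesis using HL by linarith
qed

lemma main_bound: "3 * k_cliques 3 V E \<le> 12 * card V"
  using sum_tv tri_sum[OF sg] by simp

end

lemma rho_le4:
  assumes "in_class 6 5 V E" "card V \<ge> 1"
  shows "rho 3 V E \<le> 4"
proof -
  have sg: "simple_graph V E" using assms unfolding in_class_def by simp
  have "G V E"
  proof
    show "simple_graph V E" by (rule sg)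
    show "\<And>S. is_clique V E S \<Longrightarrow> card S \<le> 5" using assms unfolding in_class_def by simp
    fix v show "card (nb E v) \<le> 6"
    proof (cases "v \<in> V")
      case True then show ?thesis using assms degree_nb[OF sg] unfolding in_class_def by simp
    next
      case False
      have "nb E v = {}"
      proof (rule ccontr)
        assume "nb E v \<noteq> {}"
        then obtain u where "{v,u} \<in> E" unfolding nb_def by auto
        then show False using edge_props[OF sg] False by blast
      qed
      then show ?thesis by simp
    qed
  qed
  then have "3 * k_cliques 3 V E \<le> 12 * card V" by (rule G.main_bound)
  then have "real (k_cliques 3 V E) \<le> 4 * real (card V)" by linarith
  then show ?thesis unfolding rho_def using assms(2) by (simp add: divide_le_eq)
qed



lemma T84E: "{x,y} \<in> T84_E \<longleftrightarrow> x < 8 \<and> y < 8 \<and> x div 2 \<noteq> y div 2"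
  unfolding T84_E_def T84_V_def by (auto simp: doubleton_eq_iff)

lemma T84_sg: "simple_graph T84_V T84_E"
  unfolding simple_graph_def
proof
  show "finite T84_V" unfolding T84_V_def by simp
  show "\<forall>e\<in>T84_E. e \<subseteq> T84_V \<and> card e = 2"
  proof
    fix e assume "e \<in> T84_E"
    then obtain x y where "e = {x,y}" "x \<in> T84_V" "y \<in> T84_V" "x div 2 \<noteq> y div 2"
      unfolding T84_E_def by auto
    then show "e \<subseteq> T84_V \<and> card e = 2" by (cases "x = y") auto
  qed
qed

lemma T84_cl_eq: "{S. is_clique T84_V T84_E S \<and> card S = 3} = Set.filter (\<lambda>S. card S = 3 \<and> (\<forall>x\<in>S. \<forall>y\<in>S. x \<noteq> y \<longrightarrow> x div 2 \<noteq> y div 2)) (Pow (set [0..<8]))"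
  unfolding is_clique_def by (auto simp: T84E T84_V_def)

lemma T84_cnt: "card (Set.filter (\<lambda>S. card S = 3 \<and> (\<forall>x\<in>S. \<forall>y\<in>S. x \<noteq> y \<longrightarrow> x div 2 \<noteq> y div 2)) (Pow (set [0..<8]))) = 32"
  by code_simp

lemma T84_rho: "rho 3 T84_V T84_E = 4"
proof -
  have "k_cliques 3 T84_V T84_E = 32" unfolding k_cliques_def T84_cl_eq T84_cnt ..
  moreover have "card T84_V = 8" unfolding T84_V_def by simp
  ultimately show ?thesis unfolding rho_def by simp
qed

lemma T84_nb: "v < 8 \<Longrightarrow> nb T84_E v = Set.filter (\<lambda>u. v div 2 \<noteq> u div 2) (set [0..<8])"
  unfolding nb_def by (auto simp: T84E)

lemma T84_degc: "\<forall>v\<in>set [0..<8]. card (Set.filter (\<lambda>u. v div 2 \<noteq> u div 2) (set [0..<8])) \<le> 6"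
  by code_simp

lemma T84_class: "in_class 6 5 T84_V T84_E"
  unfolding in_class_def
proof (intro conjI ballI allI impI)
  show "simple_graph T84_V T84_E" by (rule T84_sg)
  fix v assume "v \<in> T84_V"
  then have "v < 8" unfolding T84_V_def by simp
  then show "degree T84_E v \<le> 6"
    using degree_nb[OF T84_sg] T84_nb T84_degc by simp
next
  fix S assume S: "is_clique T84_V T84_E S"
  then have sub: "S \<subseteq> {0..<8}" unfolding is_clique_def T84_V_def by simp
  have inj: "inj_on (\<lambda>x. x div 2) S"
  proof (rule inj_onI)
    fix x y assume "x \<in> S" "y \<in> S" "x div 2 = y div 2"
    then show "x = y" using S unfolding is_clique_def by (auto simp: T84E)
  qed
  have "(\<lambda>x. x div 2) ` S \<subseteq> {0..<4}" using sub by auto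
  then have "card ((\<lambda>x. x div 2) ` S) \<le> 4" using card_mono[of "{0..<4::nat}"] by fastforce
  then show "card S \<le> 5" using card_image[OF inj] by simp
qed

theorem mainTheorem20:
  shows "f_sup 3 6 5 = 4 \<and> rho 3 T84_V T84_E = 4"
proof
  show "rho 3 T84_V T84_E = 4" by (rule T84_rho)
  have mem: "4 \<in> {rho 3 V E | V E. in_class 6 5 V E \<and> card V \<ge> 1}"
  proof -
    have "card T84_V = 8" unfolding T84_V_def by simp
    then show ?thesis using T84_class T84_rho by force
  qed
  have ub: "\<forall>x\<in>{rho 3 V E | V E. in_class 6 5 V E \<and> card V \<ge> 1}. x \<le> 4"
    using rho_le4 by blast
  show "f_sup 3 6 5 = 4" unfolding f_sup_def
    by (rule cSup_eq_maximum[OF mem]) (use ub in blast)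
qed


end
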